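(* Let $\mathcal{X}\subseteq\mathbb{R}^d$ with the Euclidean norm, let $\mathcal{H}$ be a class of real-valued functions on $\mathcal{X}$ each of which is $L$-Lipschitz, and let $\mathcal{D}_1,\mathcal{D}_2$ be probability distributions over $\mathcal{X}$. Then for any $h_1,h_2\in\mathcal{H}$, $$\mathcal{W}(\mathcal{D}_1,\mathcal{D}_2)\ge\frac{1}{2L}\,\big|\epsilon_{\mathcal{D}_1}(h_1,h_2)-\epsilon_{\mathcal{D}_2}(h_1,h_2)\big|.$$
   Context: $\epsilon_{\mathcal{D}}(h_1,h_2)=\mathbb{E}_{z\sim\mathcal{D}}|h_1(z)-h_2(z)|$. $\mathcal{W}(P_1,P_2)=\inf_{\gamma\in\Pi(P_1,P_2)}\mathbb{E}_{(x,y)\sim\gamma}\|x-y\|_2$ is the Wasserstein-1 distance, where $\Pi(P_1,P_2)$ is the set of couplings of $P_1$ and $P_2$. *)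

theory Defs
  imports "HOL-Probability.Probability"
begin

definition couplings :: "'a measure \<Rightarrow> 'b measure \<Rightarrow> ('a \<times> 'b) measure set" where
  "couplings P Q = {\<gamma>. sets \<gamma> = sets (P \<Otimes>\<^sub>M Q) \<and> prob_space \<gamma> \<and>
      distr \<gamma> P fst = P \<and> distr \<gamma> Q snd = Q}"

definition wasserstein1 :: "'a::real_normed_vector measure \<Rightarrow> 'a measure \<Rightarrow> ennreal" where
  "wasserstein1 P Q = (INF \<gamma>\<in>couplings P Q. \<integral>\<^sup>+ z. ennreal (norm (fst z - snd z)) \<partial>\<gamma>)"

definition eps :: "'a measure \<Rightarrow> ('a \<Rightarrow> real) \<Rightarrow> ('a \<Rightarrow> real) \<Rightarrow> real" where
  "eps D h1 h2 = (\<integral> z. \<bar>h1 z - h2 z\<bar> \<partial>D)"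

end

theory Submission
  imports Defs
begin

lemma ident_meas:
  assumes "sets D = sets (restrict_space borel X)"
  shows "(\<lambda>x. x) \<in> measurable D borel"
proof -
  have "(\<lambda>x. x) \<in> measurable (restrict_space borel X) borel"
    by (intro measurable_restrict_space1) simp
  then show ?thesis using measurable_cong_sets[OF assms refl, of borel] by blast
qed

lemma lemmaA2_aux:
  fixes f :: "'a::euclidean_space \<Rightarrow> real"
  assumes D1: "sets D1 = sets (restrict_space borel X)" "space D1 = X"
    and D2: "sets D2 = sets (restrict_space borel X)" "space D2 = X"
    and g: "g \<in> couplings D1 D2"
    and fm: "f \<in> borel_measurable (restrict_space borel X)"
    and lip: "\<And>x y. x \<in> X \<Longrightarrow> y \<in> X \<Longrightarrow> \<bar>f x - f y\<bar> \<le> C * dist x y"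
    and C: "C \<ge> 0" and fnn: "\<And>x. f x \<ge> 0"
  shows "(\<integral>\<^sup>+ x. ennreal (f x) \<partial>D1) \<le> (\<integral>\<^sup>+ y. ennreal (f y) \<partial>D2)
            + ennreal C * (\<integral>\<^sup>+ z. ennreal (norm (fst z - snd z)) \<partial>g)"
   and "(\<integral>\<^sup>+ x. ennreal (f x) \<partial>D2) \<le> (\<integral>\<^sup>+ y. ennreal (f y) \<partial>D1)
            + ennreal C * (\<integral>\<^sup>+ z. ennreal (norm (fst z - snd z)) \<partial>g)"
proof -
  have sg: "sets g = sets (D1 \<Otimes>\<^sub>M D2)" and d1: "distr g D1 fst = D1" and d2: "distr g D2 snd = D2"
    using g unfolding couplings_def by auto
  have spg: "space g = X \<times> X"
    using sets_eq_imp_space_eq[OF sg] D1 D2 by (simp add: space_pair_measure)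
  have fst1: "fst \<in> measurable g D1"
    using measurable_cong_sets[OF sg refl] measurable_fst by blast
  have snd1: "snd \<in> measurable g D2"
    using measurable_cong_sets[OF sg refl] measurable_snd by blast
  have fD1: "f \<in> borel_measurable D1" using fm measurable_cong_sets[OF D1(1) refl, of borel] by blast
  have fD2: "f \<in> borel_measurable D2" using fm measurable_cong_sets[OF D2(1) refl, of borel] by blast
  have fstb: "fst \<in> borel_measurable g"
    using measurable_comp[OF fst1 ident_meas[OF D1(1)]] by (simp add: o_def)
  have sndb: "snd \<in> borel_measurable g"
    using measurable_comp[OF snd1 ident_meas[OF D2(1)]] by (simp add: o_def)
  have nm: "(\<lambda>z. norm (fst z - snd z)) \<in> borel_measurable g"
    using measurable_compose[OF borel_measurable_diff[OF fstb sndb] borel_measurable_norm] by simp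
  have ff: "(\<lambda>z. f (fst z)) \<in> borel_measurable g"
    using measurable_comp[OF fst1 fD1] by (simp add: o_def)
  have fs: "(\<lambda>z. f (snd z)) \<in> borel_measurable g"
    using measurable_comp[OF snd1 fD2] by (simp add: o_def)
  have N1: "(\<integral>\<^sup>+ x. ennreal (f x) \<partial>D1) = (\<integral>\<^sup>+ z. ennreal (f (fst z)) \<partial>g)"
    using nn_integral_distr[OF fst1, of "\<lambda>x. ennreal (f x)"] fD1 d1 by simp
  have N2: "(\<integral>\<^sup>+ x. ennreal (f x) \<partial>D2) = (\<integral>\<^sup>+ z. ennreal (f (snd z)) \<partial>g)"
    using nn_integral_distr[OF snd1, of "\<lambda>x. ennreal (f x)"] fD2 d2 by simp
  have pw1: "ennreal (f (fst z)) \<le> ennreal (f (snd z)) + ennreal C * ennreal (norm (fst z - snd z))"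
    if "z \<in> space g" for z
  proof -
    have x: "fst z \<in> X" "snd z \<in> X" using that unfolding spg mem_Times_iff by blast+
    have "\<bar>f (fst z) - f (snd z)\<bar> \<le> C * dist (fst z) (snd z)" by (rule lip[OF x])
    also have "dist (fst z) (snd z) = norm (fst z - snd z)" by (metis dist_norm dist_commute)
    finally have r: "f (fst z) \<le> f (snd z) + C * norm (fst z - snd z)" by linarith
    have nn: "0 \<le> C * norm (fst z - snd z)" using C by simp
    have "ennreal (f (fst z)) \<le> ennreal (f (snd z) + C * norm (fst z - snd z))" by (rule ennreal_leI[OF r])
    also have "\<dots> = ennreal (f (snd z)) + ennreal (C * norm (fst z - snd z))"
      by (rule ennreal_plus[OF fnn nn])
    also have "\<dots> = ennreal (f (snd z)) + ennreal C * ennreal (norm (fst z - snd z))"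
      by (simp only: ennreal_mult[OF C norm_ge_zero])
    finally show ?thesis .
  qed
  have pw2: "ennreal (f (snd z)) \<le> ennreal (f (fst z)) + ennreal C * ennreal (norm (fst z - snd z))"
    if "z \<in> space g" for z
  proof -
    have x: "snd z \<in> X" "fst z \<in> X" using that unfolding spg mem_Times_iff by blast+
    have "\<bar>f (snd z) - f (fst z)\<bar> \<le> C * dist (snd z) (fst z)" by (rule lip[OF x])
    also have "dist (snd z) (fst z) = norm (fst z - snd z)" by (metis dist_norm dist_commute)
    finally have r: "f (snd z) \<le> f (fst z) + C * norm (fst z - snd z)" by linarith
    have nn: "0 \<le> C * norm (fst z - snd z)" using C by simp
    have "ennreal (f (snd z)) \<le> ennreal (f (fst z) + C * norm (fst z - snd z))" by (rule ennreal_leI[OF r])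
    also have "\<dots> = ennreal (f (fst z)) + ennreal (C * norm (fst z - snd z))"
      by (rule ennreal_plus[OF fnn nn])
    also have "\<dots> = ennreal (f (fst z)) + ennreal C * ennreal (norm (fst z - snd z))"
      by (simp only: ennreal_mult[OF C norm_ge_zero])
    finally show ?thesis .
  qed
  have "(\<integral>\<^sup>+ z. ennreal (f (fst z)) \<partial>g) \<le>
        (\<integral>\<^sup>+ z. ennreal (f (snd z)) + ennreal C * ennreal (norm (fst z - snd z)) \<partial>g)"
    by (rule nn_integral_mono) (use pw1 in auto)
  also have "\<dots> = (\<integral>\<^sup>+ z. ennreal (f (snd z)) \<partial>g) + ennreal C * (\<integral>\<^sup>+ z. ennreal (norm (fst z - snd z)) \<partial>g)"
    using fs nm by (simp add: nn_integral_add nn_integral_cmult)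
  finally show "(\<integral>\<^sup>+ x. ennreal (f x) \<partial>D1) \<le> (\<integral>\<^sup>+ y. ennreal (f y) \<partial>D2)
            + ennreal C * (\<integral>\<^sup>+ z. ennreal (norm (fst z - snd z)) \<partial>g)" using N1 N2 by simp
  have "(\<integral>\<^sup>+ z. ennreal (f (snd z)) \<partial>g) \<le>
        (\<integral>\<^sup>+ z. ennreal (f (fst z)) + ennreal C * ennreal (norm (fst z - snd z)) \<partial>g)"
    by (rule nn_integral_mono) (use pw2 in auto)
  also have "\<dots> = (\<integral>\<^sup>+ z. ennreal (f (fst z)) \<partial>g) + ennreal C * (\<integral>\<^sup>+ z. ennreal (norm (fst z - snd z)) \<partial>g)"
    using ff nm by (simp add: nn_integral_add nn_integral_cmult)
  finally show "(\<integral>\<^sup>+ x. ennreal (f x) \<partial>D2) \<le> (\<integral>\<^sup>+ y. ennreal (f y) \<partial>D1)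
            + ennreal C * (\<integral>\<^sup>+ z. ennreal (norm (fst z - snd z)) \<partial>g)" using N1 N2 by simp
qed

theorem lemmaA2:
  fixes X :: "'a::euclidean_space set"
    and H :: "('a \<Rightarrow> real) set"
    and L :: real
    and D1 D2 :: "'a measure"
  assumes L_pos: "L > 0"
    and H_lip: "\<forall>h\<in>H. L-lipschitz_on X h"
    and D1: "prob_space D1" "space D1 = X" "sets D1 = sets (restrict_space borel X)"
    and D2: "prob_space D2" "space D2 = X" "sets D2 = sets (restrict_space borel X)"
    and h1: "h1 \<in> H" and h2: "h2 \<in> H"
  shows "ennreal (1 / (2 * L) * \<bar>eps D1 h1 h2 - eps D2 h1 h2\<bar>) \<le> wasserstein1 D1 D2"
proof -
  define f where "f = (\<lambda>z. \<bar>h1 z - h2 z\<bar>)"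
  have l1: "L-lipschitz_on X h1" and l2: "L-lipschitz_on X h2" using H_lip h1 h2 by auto
  have lip: "\<bar>f x - f y\<bar> \<le> (2*L) * dist x y" if "x \<in> X" "y \<in> X" for x y
  proof -
    have "dist (h1 x) (h1 y) \<le> L * dist x y" "dist (h2 x) (h2 y) \<le> L * dist x y"
      using lipschitz_onD[OF l1 that] lipschitz_onD[OF l2 that] by auto
    then show ?thesis unfolding f_def dist_real_def by linarith
  qed
  have cont: "continuous_on X f"
    unfolding f_def
    by (rule continuous_on_rabs[OF continuous_on_diff[OF lipschitz_on_continuous_on[OF l1] lipschitz_on_continuous_on[OF l2]]])
  have f_nn: "\<And>x. f x \<ge> 0" unfolding f_def by simp
  have fm: "f \<in> borel_measurable (restrict_space borel X)"
    by (rule borel_measurable_continuous_on_restrict[OF cont])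
  have fD1: "f \<in> borel_measurable D1" using fm measurable_cong_sets[OF D1(3) refl, of borel] by blast
  have fD2: "f \<in> borel_measurable D2" using fm measurable_cong_sets[OF D2(3) refl, of borel] by blast
  have e1: "eps D1 h1 h2 = enn2real (\<integral>\<^sup>+ x. ennreal (f x) \<partial>D1)"
    unfolding eps_def using integral_eq_nn_integral[OF fD1] by (simp add: f_def)
  have e2: "eps D2 h1 h2 = enn2real (\<integral>\<^sup>+ x. ennreal (f x) \<partial>D2)"
    unfolding eps_def using integral_eq_nn_integral[OF fD2] by (simp add: f_def)
  show ?thesis
    unfolding wasserstein1_def
  proof (rule INF_greatest)
    fix g assume g: "g \<in> couplings D1 D2"
    define I where "I = (\<integral>\<^sup>+ z. ennreal (norm (fst z - snd z)) \<partial>g)"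
    define N1 where "N1 = (\<integral>\<^sup>+ x. ennreal (f x) \<partial>D1)"
    define N2 where "N2 = (\<integral>\<^sup>+ x. ennreal (f x) \<partial>D2)"
    have A: "N1 \<le> N2 + ennreal (2*L) * I" and B: "N2 \<le> N1 + ennreal (2*L) * I"
      using lemmaA2_aux[OF D1(3,2) D2(3,2) g fm lip _ f_nn] L_pos unfolding I_def N1_def N2_def by auto
    show "ennreal (1 / (2 * L) * \<bar>eps D1 h1 h2 - eps D2 h1 h2\<bar>) \<le> I"
    proof (cases "I = \<infinity>")
      case True then show ?thesis by simp
    next
      case False
      then obtain i where i: "I = ennreal i" "i \<ge> 0" by (cases I) auto
      have ci: "ennreal (2*L) * I = ennreal (2*L*i)"
        using ennreal_mult[of "2*L" i] L_pos i by simp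
      show ?thesis
      proof (cases "N1 = \<infinity> \<or> N2 = \<infinity>")
        case True
        have "N1 = \<infinity> \<and> N2 = \<infinity>"
        proof (cases "N1 = \<infinity>")
          case True
          then have "N2 + ennreal (2*L*i) = \<infinity>" using A ci by (simp add: top_unique)
          then show ?thesis using True by simp
        next
          case False
          then have "N2 = \<infinity>" using \<open>N1 = \<infinity> \<or> N2 = \<infinity>\<close> by simp
          then have "N1 + ennreal (2*L*i) = \<infinity>" using B ci by (simp add: top_unique)
          then show ?thesis using False by simp
        qed
        then show ?thesis using e1 e2 unfolding N1_def N2_def by simp
      next
        case False
        then have "N1 \<noteq> \<infinity>" "N2 \<noteq> \<infinity>" by auto
        obtain a where a: "N1 = ennreal a" "a \<ge> 0" using \<open>N1 \<noteq> \<infinity>\<close> by (cases N1) auto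
        obtain b where b: "N2 = ennreal b" "b \<ge> 0" using \<open>N2 \<noteq> \<infinity>\<close> by (cases N2) auto
        have "ennreal a \<le> ennreal b + ennreal (2*L*i)" using A a b ci by simp
        also have "\<dots> = ennreal (b + 2*L*i)" using ennreal_plus[of b "2*L*i"] L_pos i b by simp
        finally have "ennreal a \<le> ennreal (b + 2*L*i)" .
        moreover have "0 \<le> b + 2*L*i" using b i L_pos by simp
        ultimately have ab1: "a \<le> b + 2*L*i" using ennreal_le_iff by blast
        have "ennreal b \<le> ennreal a + ennreal (2*L*i)" using B a b ci by simp
        also have "\<dots> = ennreal (a + 2*L*i)" using ennreal_plus[of a "2*L*i"] L_pos i a by simp
        finally have "ennreal b \<le> ennreal (a + 2*L*i)" .
        moreover have "0 \<le> a + 2*L*i" using a i L_pos by simp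
        ultimately have ab2: "b \<le> a + 2*L*i" using ennreal_le_iff by blast
        have "\<bar>a - b\<bar> \<le> 2*L*i" using ab1 ab2 by linarith
        then have "\<bar>a - b\<bar> / (2 * L) \<le> (2*L*i) / (2*L)"
          using L_pos by (intro divide_right_mono) auto
        also have "\<dots> = i" using L_pos by simp
        finally have le: "1 / (2 * L) * \<bar>a - b\<bar> \<le> i" by simp
        have "eps D1 h1 h2 = a" using e1 a unfolding N1_def by simp
        moreover have "eps D2 h1 h2 = b" using e2 b unfolding N2_def by simp
        ultimately show ?thesis using i le ennreal_leI[OF le] by simp
      qed
    qed
  qed
qed

end
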